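(* For integers $n\ge 1$, $p\ge 0$, let $\alpha_{n,p}(t)=\sum_j\alpha_{j;n,p}t^j$, where $\alpha_{j;n,p}$ is the number of saturated $n\times p$ tableaux with exactly $j$ marked cells. Then $$\alpha_{n,p}(t)=-n!\sum_{i=0}^n\frac{r_{n-i+1}}{(n-i)!}\sum_{\lambda\vdash i}\frac{(1+P_\lambda(t))^p}{\lambda!}.$$
   Context: An $n\times p$ tableau is a set of marked cells in an $n\times p$ grid; it is saturated if whenever cells $(x,x'),(x,y'),(y,y')$ are marked then $(y,x')$ is marked. $\lambda\vdash i$ ranges over integer partitions $\lambda=[\lambda_1,\dots,\lambda_k]$ of $i$ (for $i=0$ only the empty partition). $P_\lambda(t)=\sum_{j=1}^k t^{\lambda_j}$ (so $P_\emptyset=0$), and $\lambda!=\left(\prod_j\lambda_j!\right)\left(\prod_i\mathrm{mult}_i(\lambda)!\right)$ where $\mathrm{mult}_i(\lambda)$ is the number of parts of $\lambda$ equal to $i$. The $r_k$ are the Rao Uppuluri-Carpenter numbers, defined by $\sum_{k\ge0}r_k\frac{t^k}{k!}=\exp(1-e^t)$, equivalently $r_k=\sum_{j=0}^k(-1)^jS_{k,j}$ with $S_{k,j}$ Stirling numbers of the second kind ($r_0=1,r_1=-1,r_2=0,r_3=1,\dots$). *)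

theory Defs
  imports Complex_Main "HOL-Combinatorics.Stirling" "HOL-Library.Multiset"
begin

text \<open>An n x p tableau: a set of marked cells (row, column) with row < n, column < p.\<close>
definition tableau :: "nat \<Rightarrow> nat \<Rightarrow> (nat \<times> nat) set \<Rightarrow> bool" where
  "tableau n p T \<longleftrightarrow> T \<subseteq> {0..<n} \<times> {0..<p}"

definition saturated :: "(nat \<times> nat) set \<Rightarrow> bool" where
  "saturated T \<longleftrightarrow> (\<forall>x y x' y'. (x, x') \<in> T \<and> (x, y') \<in> T \<and> (y, y') \<in> T \<longrightarrow> (y, x') \<in> T)"

definition alpha_coeff :: "nat \<Rightarrow> nat \<Rightarrow> nat \<Rightarrow> nat" where
  "alpha_coeff j n p = card {T. tableau n p T \<and> saturated T \<and> card T = j}"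

definition alpha_poly :: "nat \<Rightarrow> nat \<Rightarrow> real \<Rightarrow> real" where
  "alpha_poly n p t = (\<Sum>j\<le>n * p. real (alpha_coeff j n p) * t ^ j)"

definition partitions_of :: "nat \<Rightarrow> nat multiset set" where
  "partitions_of i = {lam. (\<forall>x\<in>#lam. 0 < x) \<and> sum_mset lam = i}"

definition P_part :: "nat multiset \<Rightarrow> real \<Rightarrow> real" where
  "P_part lam t = (\<Sum>x\<in>#lam. t ^ x)"

definition part_fact :: "nat multiset \<Rightarrow> nat" where
  "part_fact lam = (\<Prod>x\<in>#lam. fact x) * (\<Prod>x\<in>set_mset lam. fact (count lam x))"

definition ruc :: "nat \<Rightarrow> int" where
  "ruc k = (\<Sum>j\<le>k. (-1) ^ j * int (Stirling k j))"

end

theory Submission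
  imports Defs "HOL-Library.FuncSet"
begin

definition SA :: "nat \<Rightarrow> nat \<Rightarrow> nat" where
  "SA m j = (\<Sum>k\<le>m. (m choose k) * Stirling k j)"

lemma Stirling_0': "Stirling k 0 = (if k = 0 then 1 else 0)"
  by (cases k) auto

lemma SA_0: "SA m 0 = 1"
  unfolding SA_def Stirling_0' by (simp add: if_distrib cong: if_cong)

lemma SA_Suc: "SA (Suc m) j = SA m j + (\<Sum>k\<le>m. (m choose k) * Stirling (Suc k) j)"
proof -
  have 1: "SA (Suc m) j = Stirling 0 j + (\<Sum>k\<le>m. (Suc m choose Suc k) * Stirling (Suc k) j)"
    unfolding SA_def by (subst sum.atMost_Suc_shift) simp
  have 2: "\<dots> = Stirling 0 j + (\<Sum>k\<le>m. (m choose k) * Stirling (Suc k) j)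
       + (\<Sum>k\<le>m. (m choose Suc k) * Stirling (Suc k) j)"
    by (simp add: sum.distrib algebra_simps)
  have "SA m j = (\<Sum>k\<le>Suc m. (m choose k) * Stirling k j)"
    unfolding SA_def by (simp)
  also have "\<dots> = Stirling 0 j + (\<Sum>k\<le>m. (m choose Suc k) * Stirling (Suc k) j)"
    by (subst sum.atMost_Suc_shift) simp
  finally show ?thesis using 1 2 by simp
qed

lemma Stirling_binom:
  "Stirling (Suc m) (Suc j) = SA m j"
proof (induction m arbitrary: j)
  case 0
  then show ?case by (cases j) (auto simp: SA_def)
next
  case (Suc m)
  show ?case
  proof (cases j)
    case 0
    show ?thesis unfolding 0 Stirling_1 SA_0 by simp
  next
    case (Suc i)
    note ji = this
    have "(\<Sum>k\<le>m. (m choose k) * Stirling (Suc k) j) = j * SA m j + SA m i"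
      using ji by (simp add: SA_def sum.distrib sum_distrib_left algebra_simps)
    then have sa: "SA (Suc m) j = Suc j * SA m j + SA m i"
      using SA_Suc by simp
    have "Stirling (Suc (Suc m)) (Suc j) = Suc j * Stirling (Suc m) (Suc j) + Stirling (Suc m) (Suc i)"
      unfolding ji by (simp only: Stirling.simps)
    also have "\<dots> = Suc j * SA m j + SA m i"
      by (simp only: Suc.IH)
    finally show ?thesis using sa by simp
  qed
qed

lemma ruc_rec: "ruc (Suc j) = - (\<Sum>k\<le>j. int (j choose k) * ruc k)"
proof -
  have "ruc (Suc j) = (\<Sum>i\<le>j. (-1) ^ Suc i * int (Stirling (Suc j) (Suc i)))"
    unfolding ruc_def by (subst sum.atMost_Suc_shift) simp
  also have "\<dots> = - (\<Sum>i\<le>j. (-1) ^ i * (\<Sum>k\<le>j. int (j choose k) * int (Stirling k i)))"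
    unfolding Stirling_binom SA_def by (simp add: sum_negf)
  also have "(\<Sum>i\<le>j. (-1) ^ i * (\<Sum>k\<le>j. int (j choose k) * int (Stirling k i)))
      = (\<Sum>k\<le>j. int (j choose k) * (\<Sum>i\<le>j. (-1) ^ i * int (Stirling k i)))"
    unfolding sum_distrib_left by (subst sum.swap) (simp add: algebra_simps)
  also have "\<dots> = (\<Sum>k\<le>j. int (j choose k) * ruc k)"
  proof (rule sum.cong[OF refl])
    fix k assume k: "k \<in> {..j}"
    have "(\<Sum>i\<le>j. (-1) ^ i * int (Stirling k i)) = (\<Sum>i\<le>k. (-1) ^ i * int (Stirling k i))"
      using k by (intro sum.mono_neutral_right) auto
    then show "int (j choose k) * (\<Sum>i\<le>j. (-1) ^ i * int (Stirling k i)) = int (j choose k) * ruc k"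
      by (simp add: ruc_def)
  qed
  finally show ?thesis .
qed

lemma sum_mset_count: "sum_mset M = (\<Sum>x\<in>set_mset M. count M x * x)"
proof (induction M)
  case empty
  then show ?case by simp
next
  case (add a M)
  show ?case
  proof (cases "a \<in># M")
    case True
    have "(\<Sum>x\<in>set_mset (add_mset a M). count (add_mset a M) x * x)
        = (\<Sum>x\<in>set_mset M. count M x * x + (if x = a then a else 0))"
      using True by (intro sum.cong) (auto simp: insert_absorb)
    also have "\<dots> = (\<Sum>x\<in>set_mset M. count M x * x) + a"
      using True by (simp add: sum.distrib)
    finally show ?thesis using add by simp
  next
    case False
    have "(\<Sum>x\<in>set_mset (add_mset a M). count (add_mset a M) x * x)
        = a + (\<Sum>x\<in>set_mset M. count (add_mset a M) x * x)"
      using False by (simp add: not_in_iff)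
    also have "(\<Sum>x\<in>set_mset M. count (add_mset a M) x * x) = (\<Sum>x\<in>set_mset M. count M x * x)"
      using False by (intro sum.cong) auto
    finally show ?thesis using add False by (simp add: not_in_iff)
  qed
qed

lemma size_le_sum_mset: "(\<forall>x\<in>#M. 0 < x) \<Longrightarrow> size M \<le> sum_mset (M :: nat multiset)"
proof (induction M)
  case empty
  then show ?case by simp
next
  case (add x M)
  then have "size M \<le> sum_mset M" "0 < x" by auto
  then show ?case by simp
qed

lemma finite_partitions_of: "finite (partitions_of i)"
proof -
  have "partitions_of i \<subseteq> (\<Union>s\<le>i. multisets_of_size {1..i} s)"
  proof
    fix M assume M: "M \<in> partitions_of i"
    then have pos: "\<forall>x\<in>#M. 0 < x" and s: "sum_mset M = i" by (auto simp: partitions_of_def)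
    have "set_mset M \<subseteq> {1..i}"
    proof
      fix x assume x: "x \<in># M"
      then have "M = add_mset x (M - {#x#})" by simp
      then have "sum_mset M = x + sum_mset (M - {#x#})" by (metis sum_mset.add_mset)
      then have "x \<le> sum_mset M" by simp
      with x pos s show "x \<in> {1..i}" by auto
    qed
    moreover have "size M \<le> i" using size_le_sum_mset[OF pos] s by simp
    ultimately show "M \<in> (\<Union>s\<le>i. multisets_of_size {1..i} s)"
      by (auto simp: multisets_of_size_def)
  qed
  then show ?thesis by (rule finite_subset) auto
qed

lemma part_fact_add:
  "part_fact (add_mset x M) = part_fact M * fact x * (count M x + 1)"
proof (cases "x \<in># M")
  case True
  have "(\<Prod>y\<in>set_mset (add_mset x M). fact (count (add_mset x M) y) :: nat)
      = (\<Prod>y\<in>set_mset M. (if y = x then count M x + 1 else 1) * fact (count M y))"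
    using True by (intro prod.cong) (auto simp: insert_absorb)
  also have "\<dots> = (count M x + 1) * (\<Prod>y\<in>set_mset M. fact (count M y))"
    using True by (simp add: prod.distrib)
  finally show ?thesis by (simp add: part_fact_def algebra_simps)
next
  case False
  have "(\<Prod>y\<in>set_mset (add_mset x M). fact (count (add_mset x M) y) :: nat)
      = fact (count (add_mset x M) x) * (\<Prod>y\<in>set_mset M. fact (count (add_mset x M) y))"
    using False by simp
  also have "(\<Prod>y\<in>set_mset M. fact (count (add_mset x M) y) :: nat) = (\<Prod>y\<in>set_mset M. fact (count M y))"
    using False by (intro prod.cong) auto
  finally show ?thesis using False by (simp add: part_fact_def algebra_simps not_in_iff)
qed

lemma part_fact_pos: "part_fact M > 0"
proof -
  have "0 < prod_mset (image_mset fact M :: nat multiset)" by (induction M) auto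
  then show ?thesis by (simp add: part_fact_def prod_pos)
qed

lemma partition_rec_general:
  fixes F :: "nat multiset \<Rightarrow> real"
  shows "real (Suc m) * (\<Sum>lam\<in>partitions_of (Suc m). F lam / part_fact lam)
    = (\<Sum>k\<le>m. (\<Sum>mu\<in>partitions_of (m - k). F (add_mset (Suc k) mu) / (real (part_fact mu) * fact k)))"
proof -
  have "real (Suc m) * (\<Sum>lam\<in>partitions_of (Suc m). F lam / part_fact lam)
      = (\<Sum>lam\<in>partitions_of (Suc m). \<Sum>x\<in>set_mset lam. real (count lam x * x) * F lam / part_fact lam)"
    unfolding sum_distrib_left
  proof (rule sum.cong[OF refl])
    fix lam assume "lam \<in> partitions_of (Suc m)"
    then have "Suc m = (\<Sum>x\<in>set_mset lam. count lam x * x)"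
      by (simp add: partitions_of_def sum_mset_count)
    then have "real (Suc m) = real (\<Sum>x\<in>set_mset lam. count lam x * x)"
      by (rule arg_cong)
    then have "real (Suc m) = (\<Sum>x\<in>set_mset lam. real (count lam x * x))"
      by (simp only: of_nat_sum)
    then show "real (Suc m) * (F lam / part_fact lam) =
      (\<Sum>x\<in>set_mset lam. real (count lam x * x) * F lam / part_fact lam)"
      by (simp add: sum_distrib_right sum_divide_distrib)
  qed
  also have "\<dots> = (\<Sum>(lam, x)\<in>Sigma (partitions_of (Suc m)) set_mset. real (count lam x * x) * F lam / part_fact lam)"
    by (rule sum.Sigma) (auto simp: finite_partitions_of)
  also have "\<dots> = (\<Sum>(k, mu)\<in>Sigma {..m} (\<lambda>k. partitions_of (m - k)). F (add_mset (Suc k) mu) / (real (part_fact mu) * fact k))"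
  proof (rule sym, rule sum.reindex_bij_witness[where j = "\<lambda>(k, mu). (add_mset (Suc k) mu, Suc k)"
        and i = "\<lambda>(lam, x). (x - 1, lam - {#x#})"])
    fix a assume "a \<in> Sigma {..m} (\<lambda>k. partitions_of (m - k))"
    then obtain k mu where a: "a = (k, mu)" "k \<le> m" "mu \<in> partitions_of (m - k)" by auto
    then show "(case case a of (k, mu) \<Rightarrow> (add_mset (Suc k) mu, Suc k) of (lam, x) \<Rightarrow> (x - 1, lam - {#x#})) = a"
      by simp
    have "add_mset (Suc k) mu \<in> partitions_of (Suc m)"
      using a(2,3) unfolding partitions_of_def by simp
    then show "(case a of (k, mu) \<Rightarrow> (add_mset (Suc k) mu, Suc k)) \<in> Sigma (partitions_of (Suc m)) set_mset"
      using a(1) by simp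
    have pf: "real (part_fact (add_mset (Suc k) mu)) = real (part_fact mu) * fact (Suc k) * real (count mu (Suc k) + 1)"
      by (simp only: part_fact_add of_nat_mult of_nat_fact)
    have "real (count (add_mset (Suc k) mu) (Suc k) * Suc k) * F (add_mset (Suc k) mu) / real (part_fact (add_mset (Suc k) mu))
       = F (add_mset (Suc k) mu) / (real (part_fact mu) * fact k)"
    proof -
      have c: "count (add_mset (Suc k) mu) (Suc k) = count mu (Suc k) + 1" by simp
      have e1: "real (count (add_mset (Suc k) mu) (Suc k) * Suc k) = real (count mu (Suc k) + 1) * real (Suc k)"
        unfolding c by (simp only: of_nat_mult)
      have e2: "(fact (Suc k) :: real) = real (Suc k) * fact k" by (simp add: fact_Suc)
      have aux: "\<And>c s pm fk F :: real. c > 0 \<Longrightarrow> s > 0 \<Longrightarrow> pm > 0 \<Longrightarrow> fk > 0 \<Longrightarrow>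
          (c*s)*F/(pm*(s*fk)*c) = F/(pm*fk)" by (simp add: field_simps)
      show ?thesis unfolding pf e1 e2
        by (rule aux) (use part_fact_pos[of mu] in auto)
    qed
    then show "(case case a of (k, mu) \<Rightarrow> (add_mset (Suc k) mu, Suc k) of
          (lam, x) \<Rightarrow> real (count lam x * x) * F lam / real (part_fact lam)) =
         (case a of (k, mu) \<Rightarrow> F (add_mset (Suc k) mu) / (real (part_fact mu) * fact k))"
      by (simp only: a(1) prod.case)
  next
    fix b assume "b \<in> Sigma (partitions_of (Suc m)) set_mset"
    then obtain lam x where b: "b = (lam, x)" "lam \<in> partitions_of (Suc m)" "x \<in># lam" by auto
    then have pos: "x > 0" and sl: "sum_mset lam = Suc m" by (auto simp: partitions_of_def)
    have lam: "lam = add_mset x (lam - {#x#})" using b by simp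
    then have "sum_mset lam = x + sum_mset (lam - {#x#})" by (metis sum_mset.add_mset)
    with sl pos have s2: "sum_mset (lam - {#x#}) = m - (x - 1)" and xm: "x - 1 \<le> m" by linarith+
    have "\<forall>y\<in>#lam - {#x#}. 0 < y" using b(2) unfolding partitions_of_def by (metis (no_types, lifting) in_diffD mem_Collect_eq)
    with s2 have "lam - {#x#} \<in> partitions_of (m - (x - 1))" unfolding partitions_of_def by blast
    with xm show "(case b of (lam, x) \<Rightarrow> (x - 1, lam - {#x#})) \<in> Sigma {..m} (\<lambda>k. partitions_of (m - k))"
      using b(1) by simp
    have "Suc (x - 1) = x" using pos by simp
    then show "(case case b of (lam, x) \<Rightarrow> (x - 1, lam - {#x#}) of (k, mu) \<Rightarrow> (add_mset (Suc k) mu, Suc k)) = b"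
      using b(1,3) by (simp add: insert_DiffM)
  qed
  also have "\<dots> = (\<Sum>k\<le>m. (\<Sum>mu\<in>partitions_of (m - k). F (add_mset (Suc k) mu) / (real (part_fact mu) * fact k)))"
    by (rule sum.Sigma[symmetric]) (auto simp: finite_partitions_of)
  finally show ?thesis .
qed

lemma pascal_split:
  fixes f :: "nat \<Rightarrow> real"
  shows "(\<Sum>k\<le>Suc m. real (Suc m choose k) * f k)
       = (\<Sum>k\<le>m. real (m choose k) * f k) + (\<Sum>k\<le>m. real (m choose k) * f (Suc k))"
proof -
  have 1: "(\<Sum>k\<le>Suc m. real (Suc m choose k) * f k)
      = f 0 + (\<Sum>k\<le>m. real (Suc m choose Suc k) * f (Suc k))"
    by (subst sum.atMost_Suc_shift) simp
  have 2: "(\<Sum>k\<le>m. real (Suc m choose Suc k) * f (Suc k))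
      = (\<Sum>k\<le>m. real (m choose k) * f (Suc k)) + (\<Sum>k\<le>m. real (m choose Suc k) * f (Suc k))"
    by (simp add: sum.distrib algebra_simps)
  have "(\<Sum>k\<le>m. real (m choose k) * f k) = (\<Sum>k\<le>Suc m. real (m choose k) * f k)"
    by simp
  also have "\<dots> = f 0 + (\<Sum>k\<le>m. real (m choose Suc k) * f (Suc k))"
    by (subst sum.atMost_Suc_shift) simp
  finally show ?thesis using 1 2 by simp
qed

lemma sum_reflect: "(\<Sum>k\<le>m. f k) = (\<Sum>k\<le>m. f (m - k))" for f :: "nat \<Rightarrow> real"
  using sum.atLeastAtMost_rev[of f 0 m] by (simp add: atMost_atLeast0)

definition sseq :: "nat \<Rightarrow> real" where
  "sseq j = - real_of_int (ruc (Suc j))"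

lemma ruc_rec_real: "real_of_int (ruc (Suc j)) = - (\<Sum>k\<le>j. real (j choose k) * real_of_int (ruc k))"
  using arg_cong[OF ruc_rec[of j], of real_of_int] by simp

lemma sseq_Suc: "sseq (Suc m) = sseq m - (\<Sum>k\<le>m. real (m choose k) * sseq (m - k))"
proof -
  let ?r = "\<lambda>k. real_of_int (ruc k)"
  have "?r (Suc (Suc m)) = - (\<Sum>k\<le>Suc m. real (Suc m choose k) * ?r k)"
    by (rule ruc_rec_real)
  also have "\<dots> = - (\<Sum>k\<le>m. real (m choose k) * ?r k) - (\<Sum>k\<le>m. real (m choose k) * ?r (Suc k))"
    by (subst pascal_split) simp
  also have "- (\<Sum>k\<le>m. real (m choose k) * ?r k) = ?r (Suc m)"
    by (rule ruc_rec_real[symmetric])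
  also have "(\<Sum>k\<le>m. real (m choose k) * ?r (Suc k)) = (\<Sum>k\<le>m. real (m choose (m - k)) * ?r (Suc (m - k)))"
    by (rule sum_reflect)
  also have "\<dots> = (\<Sum>k\<le>m. real (m choose k) * ?r (Suc (m - k)))"
    by (intro sum.cong refl) (simp add: binomial_symmetric[symmetric])
  finally show ?thesis unfolding sseq_def by (simp add: sum_negf)
qed

definition Psi :: "nat \<Rightarrow> real \<Rightarrow> nat \<Rightarrow> real \<Rightarrow> real" where
  "Psi p t i c = fact i * (\<Sum>lam\<in>partitions_of i. (1 + c + P_part lam t) ^ p / real (part_fact lam))"

lemma P_part_add: "P_part (add_mset x M) t = t ^ x + P_part M t"
  by (simp add: P_part_def)

lemma Psi_Suc: "Psi p t (Suc m) c = (\<Sum>k\<le>m. real (m choose k) * Psi p t (m - k) (c + t ^ Suc k))"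
proof -
  define F where "F = (\<lambda>lam. (1 + c + P_part lam t) ^ p)"
  have "Psi p t (Suc m) c = fact m * (real (Suc m) * (\<Sum>lam\<in>partitions_of (Suc m). F lam / real (part_fact lam)))"
    unfolding Psi_def F_def by (simp add: fact_Suc del: of_nat_Suc)
  also have "\<dots> = fact m * (\<Sum>k\<le>m. (\<Sum>mu\<in>partitions_of (m - k). F (add_mset (Suc k) mu) / (real (part_fact mu) * fact k)))"
    by (simp only: partition_rec_general)
  also have "\<dots> = (\<Sum>k\<le>m. fact m * (\<Sum>mu\<in>partitions_of (m - k). F (add_mset (Suc k) mu) / (real (part_fact mu) * fact k)))"
    by (rule sum_distrib_left)
  also have "\<dots> = (\<Sum>k\<le>m. real (m choose k) * Psi p t (m - k) (c + t ^ Suc k))"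
  proof (rule sum.cong[OF refl])
    fix k assume k: "k \<in> {..m}"
    have fk: "fact m / fact k = real (m choose k) * fact (m - k)"
      using k by (simp add: binomial_fact field_simps)
    have "fact m * (\<Sum>mu\<in>partitions_of (m - k). F (add_mset (Suc k) mu) / (real (part_fact mu) * fact k))
        = (fact m / fact k) * (\<Sum>mu\<in>partitions_of (m - k). (1 + (c + t ^ Suc k) + P_part mu t) ^ p / real (part_fact mu))"
      unfolding sum_distrib_left F_def P_part_add
      by (intro sum.cong refl) (simp add: field_simps)
    also have "\<dots> = real (m choose k) * Psi p t (m - k) (c + t ^ Suc k)"
      unfolding fk Psi_def by simp
    finally show "fact m * (\<Sum>mu\<in>partitions_of (m - k). F (add_mset (Suc k) mu) / (real (part_fact mu) * fact k))
        = real (m choose k) * Psi p t (m - k) (c + t ^ Suc k)" .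
  qed
  finally show ?thesis .
qed

lemma tri_swap:
  fixes F :: "nat \<Rightarrow> nat \<Rightarrow> real"
  shows "(\<Sum>i\<le>n. \<Sum>k\<le>n - i. F i k) = (\<Sum>k\<le>n. \<Sum>i\<le>n - k. F i k)"
proof -
  have "(\<Sum>i\<in>{..n}. \<Sum>k\<in>{k. k \<in> {..n} \<and> i + k \<le> n}. F i k)
      = (\<Sum>k\<in>{..n}. \<Sum>i\<in>{i. i \<in> {..n} \<and> i + k \<le> n}. F i k)"
    by (rule sum.swap_restrict) auto
  moreover have "\<And>i. i \<le> n \<Longrightarrow> {k. k \<in> {..n} \<and> i + k \<le> n} = {..n - i}" by auto
  moreover have "\<And>k. k \<le> n \<Longrightarrow> {i. i \<in> {..n} \<and> i + k \<le> n} = {..n - k}" by auto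
  ultimately show ?thesis by simp
qed

lemma tri_shift:
  fixes G :: "nat \<Rightarrow> nat \<Rightarrow> real"
  shows "(\<Sum>i\<le>n. \<Sum>k\<le>i. G i k) = (\<Sum>k\<le>n. \<Sum>j\<le>n - k. G (j + k) k)"
proof -
  have "(\<Sum>i\<in>{..n}. \<Sum>k\<in>{k. k \<in> {..n} \<and> k \<le> i}. G i k)
      = (\<Sum>k\<in>{..n}. \<Sum>i\<in>{i. i \<in> {..n} \<and> k \<le> i}. G i k)"
    by (rule sum.swap_restrict) auto
  moreover have "\<And>i. i \<le> n \<Longrightarrow> {k. k \<in> {..n} \<and> k \<le> i} = {..i}" by auto
  moreover have "\<And>k. k \<le> n \<Longrightarrow> (\<Sum>i\<in>{i. i \<in> {..n} \<and> k \<le> i}. G i k) = (\<Sum>j\<le>n - k. G (j + k) k)"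
  proof -
    fix k assume k: "k \<le> n"
    have "{i. i \<in> {..n} \<and> k \<le> i} = {0 + k..(n - k) + k}" using k by auto
    then have "(\<Sum>i\<in>{i. i \<in> {..n} \<and> k \<le> i}. G i k) = (\<Sum>j\<in>{0..n - k}. G (j + k) k)"
      by (simp only: sum.shift_bounds_cl_nat_ivl)
    then show "(\<Sum>i\<in>{i. i \<in> {..n} \<and> k \<le> i}. G i k) = (\<Sum>j\<le>n - k. G (j + k) k)"
      by (simp add: atMost_atLeast0)
  qed
  ultimately show ?thesis by simp
qed

definition Rn :: "nat \<Rightarrow> real \<Rightarrow> nat \<Rightarrow> real \<Rightarrow> real" where
  "Rn p t n c = (\<Sum>i\<le>n. real (n choose i) * (sseq (n - i) * Psi p t i c))"

lemma choose_swap_real: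
  assumes "i + k \<le> n"
  shows "real (n choose i) * real ((n - i) choose k) = real (n choose k) * real ((n - k) choose i)"
proof -
  have "(n choose (i + k)) * ((i + k) choose i) = (n choose i) * ((n - i) choose k)"
    using choose_mult[of i "i + k" n] assms by simp
  moreover have "(n choose (i + k)) * ((i + k) choose k) = (n choose k) * ((n - k) choose i)"
    using choose_mult[of k "i + k" n] assms by simp
  moreover have "(i + k) choose i = (i + k) choose k"
    using binomial_symmetric[of i "i + k"] by simp
  ultimately have "(n choose i) * ((n - i) choose k) = (n choose k) * ((n - k) choose i)" by simp
  then show ?thesis by (metis of_nat_mult)
qed

lemma Rn_Suc:
  "Rn p t (Suc n) c = Rn p t n c + (\<Sum>k\<le>n. real (n choose k) * (Rn p t (n - k) (c + t ^ Suc k) - Rn p t (n - k) c))"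
proof -
  let ?P = "Psi p t"
  define D1 where "D1 = (\<Sum>i\<le>n. \<Sum>k\<le>n - i. real (n choose i) * real ((n - i) choose k) * sseq (n - i - k) * ?P i c)"
  define D2 where "D2 = (\<Sum>i\<le>n. \<Sum>k\<le>i. real (n choose i) * real (i choose k) * sseq (n - i) * ?P (i - k) (c + t ^ Suc k))"
  have "Rn p t (Suc n) c = (\<Sum>i\<le>n. real (n choose i) * (sseq (Suc n - i) * ?P i c))
      + (\<Sum>i\<le>n. real (n choose i) * (sseq (Suc n - Suc i) * ?P (Suc i) c))"
    unfolding Rn_def by (rule pascal_split)
  also have "(\<Sum>i\<le>n. real (n choose i) * (sseq (Suc n - i) * ?P i c)) = Rn p t n c - D1"
  proof -
    have "(\<Sum>i\<le>n. real (n choose i) * (sseq (Suc n - i) * ?P i c))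
       = (\<Sum>i\<le>n. real (n choose i) * (sseq (n - i) * ?P i c)
            - (\<Sum>k\<le>n - i. real (n choose i) * real ((n - i) choose k) * sseq (n - i - k) * ?P i c))"
    proof (rule sum.cong[OF refl])
      fix i assume "i \<in> {..n}"
      then have "Suc n - i = Suc (n - i)" by auto
      then show "real (n choose i) * (sseq (Suc n - i) * ?P i c) = real (n choose i) * (sseq (n - i) * ?P i c)
            - (\<Sum>k\<le>n - i. real (n choose i) * real ((n - i) choose k) * sseq (n - i - k) * ?P i c)"
        by (simp add: sseq_Suc algebra_simps sum_distrib_left sum_distrib_right)
    qed
    then show ?thesis unfolding Rn_def D1_def by (simp add: sum_subtractf)
  qed
  also have "(\<Sum>i\<le>n. real (n choose i) * (sseq (Suc n - Suc i) * ?P (Suc i) c)) = D2"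
    unfolding D2_def
    by (intro sum.cong refl) (simp add: Psi_Suc sum_distrib_left algebra_simps)
  also have "D1 = (\<Sum>k\<le>n. real (n choose k) * Rn p t (n - k) c)"
  proof -
    have "D1 = (\<Sum>k\<le>n. \<Sum>i\<le>n - k. real (n choose i) * real ((n - i) choose k) * sseq (n - i - k) * ?P i c)"
      unfolding D1_def by (rule tri_swap)
    also have "\<dots> = (\<Sum>k\<le>n. \<Sum>i\<le>n - k. real (n choose k) * (real ((n - k) choose i) * (sseq (n - k - i) * ?P i c)))"
    proof (intro sum.cong refl)
      fix k i assume "k \<in> {..n}" "i \<in> {..n - k}"
      then have "i + k \<le> n" by auto
      from choose_swap_real[OF this] show "real (n choose i) * real ((n - i) choose k) * sseq (n - i - k) * ?P i c
          = real (n choose k) * (real ((n - k) choose i) * (sseq (n - k - i) * ?P i c))"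
        by (simp add: algebra_simps diff_commute)
    qed
    also have "\<dots> = (\<Sum>k\<le>n. real (n choose k) * Rn p t (n - k) c)"
      unfolding Rn_def by (simp add: sum_distrib_left)
    finally show ?thesis .
  qed
  also have "D2 = (\<Sum>k\<le>n. real (n choose k) * Rn p t (n - k) (c + t ^ Suc k))"
  proof -
    have "D2 = (\<Sum>k\<le>n. \<Sum>j\<le>n - k. real (n choose (j + k)) * real ((j + k) choose k) * sseq (n - (j + k)) * ?P (j + k - k) (c + t ^ Suc k))"
      unfolding D2_def by (rule tri_shift)
    also have "\<dots> = (\<Sum>k\<le>n. \<Sum>j\<le>n - k. real (n choose k) * (real ((n - k) choose j) * (sseq (n - k - j) * ?P j (c + t ^ Suc k))))"
    proof (intro sum.cong refl)
      fix k j assume "k \<in> {..n}" "j \<in> {..n - k}"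
      then have jk: "k \<le> j + k" "j + k \<le> n" by auto
      have "(n choose (j + k)) * ((j + k) choose k) = (n choose k) * ((n - k) choose j)"
        using choose_mult[OF jk] by simp
      then have "real (n choose (j + k)) * real ((j + k) choose k) = real (n choose k) * real ((n - k) choose j)"
        by (metis of_nat_mult)
      then show "real (n choose (j + k)) * real ((j + k) choose k) * sseq (n - (j + k)) * ?P (j + k - k) (c + t ^ Suc k)
          = real (n choose k) * (real ((n - k) choose j) * (sseq (n - k - j) * ?P j (c + t ^ Suc k)))"
        by (simp add: algebra_simps diff_diff_add)
    qed
    also have "\<dots> = (\<Sum>k\<le>n. real (n choose k) * Rn p t (n - k) (c + t ^ Suc k))"
      unfolding Rn_def by (simp add: sum_distrib_left)
    finally show ?thesis .
  qed
  finally show ?thesis by (simp add: sum_subtractf algebra_simps)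
qed

fun wt :: "real \<Rightarrow> real \<Rightarrow> nat set option \<Rightarrow> real" where
  "wt t c None = c"
| "wt t c (Some S) = t ^ card S"

definition good :: "nat \<Rightarrow> nat set \<Rightarrow> (nat \<Rightarrow> nat set option) \<Rightarrow> bool" where
  "good p X R \<longleftrightarrow> (\<forall>y. p \<le> y \<longrightarrow> R y = undefined) \<and> (\<forall>y<p. \<forall>S. R y = Some S \<longrightarrow> S \<subseteq> X) \<and>
     (\<forall>y<p. \<forall>y'<p. \<forall>S S'. R y = Some S \<longrightarrow> R y' = Some S' \<longrightarrow> S = S' \<or> S \<inter> S' = {})"

lemma good_undef: "good p X R \<Longrightarrow> p \<le> y \<Longrightarrow> R y = undefined"
  unfolding good_def by simp

lemma good_sub: "good p X R \<Longrightarrow> y < p \<Longrightarrow> R y = Some S \<Longrightarrow> S \<subseteq> X"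
  unfolding good_def by simp

lemma good_disj: "good p X R \<Longrightarrow> y < p \<Longrightarrow> y' < p \<Longrightarrow> R y = Some S \<Longrightarrow> R y' = Some S' \<Longrightarrow> S = S' \<or> S \<inter> S' = {}"
  unfolding good_def by simp

lemma goodI:
  assumes "\<And>y. p \<le> y \<Longrightarrow> R y = undefined"
    and "\<And>y S. y < p \<Longrightarrow> R y = Some S \<Longrightarrow> S \<subseteq> X"
    and "\<And>y y' S S'. y < p \<Longrightarrow> y' < p \<Longrightarrow> R y = Some S \<Longrightarrow> R y' = Some S' \<Longrightarrow> S = S' \<or> S \<inter> S' = {}"
  shows "good p X R"
  unfolding good_def using assms by simp

definition Good :: "nat \<Rightarrow> nat set \<Rightarrow> (nat \<Rightarrow> nat set option) set" where
  "Good p X = {R. good p X R}"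

definition W :: "nat \<Rightarrow> real \<Rightarrow> nat set \<Rightarrow> real \<Rightarrow> real" where
  "W p t X c = (\<Sum>R\<in>Good p X. \<Prod>y<p. wt t c (R y))"

lemma Good_subset_PiE: "Good p X \<subseteq> {..<p} \<rightarrow>\<^sub>E insert None (Some ` Pow X)"
proof
  fix R assume "R \<in> Good p X"
  then have g: "good p X R" by (simp add: Good_def)
  show "R \<in> {..<p} \<rightarrow>\<^sub>E insert None (Some ` Pow X)"
  proof (rule PiE_I)
    fix y assume "y \<in> {..<p}"
    with g show "R y \<in> insert None (Some ` Pow X)"
      unfolding good_def by (cases "R y") auto
  next
    fix y assume "y \<notin> {..<p}"
    with g show "R y = undefined" unfolding good_def by auto
  qed
qed

lemma finite_Good: "finite X \<Longrightarrow> finite (Good p X)"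
  by (rule finite_subset[OF Good_subset_PiE]) (auto intro!: finite_PiE)

lemma Good_empty: "Good p {} = {..<p} \<rightarrow>\<^sub>E {None, Some {}}"
proof (intro equalityI subsetI)
  fix R assume "R \<in> Good p {}"
  moreover have "insert None (Some ` Pow ({}::nat set)) = {None, Some {}}" by simp
  ultimately show "R \<in> {..<p} \<rightarrow>\<^sub>E {None, Some {}}" using subsetD[OF Good_subset_PiE[of p "{}"]] by metis
next
  fix R :: "nat \<Rightarrow> nat set option" assume R: "R \<in> {..<p} \<rightarrow>\<^sub>E {None, Some {}}"
  have "good p {} R"
    unfolding good_def
  proof (intro conjI allI impI)
    fix y assume "p \<le> y" then show "R y = undefined" using R by (auto simp: PiE_iff extensional_def)
  next
    fix y S assume "y < p" "R y = Some S"
    then show "S \<subseteq> {}" using R by (force simp: PiE_iff)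
  next
    fix y y' S S' assume "y < p" "y' < p" "R y = Some S" "R y' = Some S'"
    then show "S = S' \<or> S \<inter> S' = {}" using R by (force simp: PiE_iff)
  qed
  then show "R \<in> Good p {}" by (simp add: Good_def)
qed

lemma W_empty: "W p t {} c = (1 + c) ^ p"
proof -
  have "(\<Prod>y<p. \<Sum>v\<in>{None, Some {}}. wt t c v) = (\<Sum>R\<in>{..<p} \<rightarrow>\<^sub>E {None, Some {}}. \<Prod>y<p. wt t c (R y))"
    by (rule prod_sum_PiE) auto
  then show ?thesis unfolding W_def Good_empty by (simp add: add.commute)
qed

definition Blk :: "nat \<Rightarrow> nat \<Rightarrow> nat set \<Rightarrow> nat set \<Rightarrow> (nat \<Rightarrow> nat set option) set" where
  "Blk p a X A = {R \<in> Good p (insert a X). \<exists>y<p. R y = Some (insert a A)}"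

lemma blk_sum:
  assumes fin: "finite X" and aX: "a \<notin> X" and AX: "A \<subseteq> X"
  shows "(\<Sum>R\<in>Blk p a X A. \<Prod>y<p. wt t c (R y))
      = W p t (X - A) (c + t ^ Suc (card A)) - W p t (X - A) c"
proof -
  define S0 where "S0 = insert a A"
  define d where "d = t ^ Suc (card A)"
  have finA: "finite A" using fin AX by (rule rev_finite_subset)
  have dS0: "wt t c (Some S0) = d"
  proof -
    have "a \<notin> A" using AX aX by auto
    then show ?thesis unfolding S0_def d_def using finA by simp
  qed
  define G' where "G' = Good p (X - A)"
  define e where "e = (\<lambda>v :: nat set option. if v = None then d else 0)"
  define T where "T = (\<lambda>(R' :: nat \<Rightarrow> nat set option, Z :: nat set).
     (\<Prod>y\<in>Z. e (R' y)) * (\<Prod>y\<in>{..<p} - Z. wt t c (R' y)))"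
  define Q where "Q = Pow {..<p} - {{}}"
  define Sig where "Sig = {(R', Z). R' \<in> G' \<and> Z \<in> Q \<and> (\<forall>y\<in>Z. R' y = None)}"
  have finG': "finite G'" unfolding G'_def using fin by (intro finite_Good) auto
  have finQ: "finite Q" unfolding Q_def by auto
  have step1: "W p t (X - A) (c + d) = W p t (X - A) c + (\<Sum>R'\<in>G'. \<Sum>Z\<in>Q. T (R', Z))"
  proof -
    have "W p t (X - A) (c + d) = (\<Sum>R'\<in>G'. \<Sum>Z\<in>Pow {..<p}. T (R', Z))"
      unfolding W_def G'_def
    proof (rule sum.cong[OF refl])
      fix R' :: "nat \<Rightarrow> nat set option"
      have "(\<Prod>y<p. wt t (c + d) (R' y)) = (\<Prod>y<p. e (R' y) + wt t c (R' y))"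
        by (rule prod.cong[OF refl]) (auto simp: e_def split: option.splits)
      also have "\<dots> = (\<Sum>Z\<in>Pow {..<p}. T (R', Z))"
        unfolding T_def by (subst prod_add) auto
      finally show "(\<Prod>y<p. wt t (c + d) (R' y)) = (\<Sum>Z\<in>Pow {..<p}. T (R', Z))" .
    qed
    also have "\<dots> = (\<Sum>R'\<in>G'. (\<Prod>y<p. wt t c (R' y)) + (\<Sum>Z\<in>Q. T (R', Z)))"
    proof (rule sum.cong[OF refl])
      fix R'
      have "(\<Sum>Z\<in>Pow {..<p}. T (R', Z)) = T (R', {}) + (\<Sum>Z\<in>Q. T (R', Z))"
        unfolding Q_def by (rule sum.remove) auto
      then show "(\<Sum>Z\<in>Pow {..<p}. T (R', Z)) = (\<Prod>y<p. wt t c (R' y)) + (\<Sum>Z\<in>Q. T (R', Z))"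
        by (simp add: T_def)
    qed
    also have "\<dots> = W p t (X - A) c + (\<Sum>R'\<in>G'. \<Sum>Z\<in>Q. T (R', Z))"
      unfolding W_def G'_def by (simp add: sum.distrib)
    finally show ?thesis .
  qed
  have step3: "(\<Sum>R'\<in>G'. \<Sum>Z\<in>Q. T (R', Z)) = (\<Sum>x\<in>G' \<times> Q. T x)"
    by (simp add: sum.cartesian_product case_prod_beta)
  have step4: "(\<Sum>x\<in>G' \<times> Q. T x) = (\<Sum>x\<in>Sig. T x)"
  proof (rule sum.mono_neutral_right)
    show "finite (G' \<times> Q)" using finG' finQ by auto
    show "Sig \<subseteq> G' \<times> Q" unfolding Sig_def by auto
    show "\<forall>x\<in>G' \<times> Q - Sig. T x = 0"
    proof
      fix x assume x: "x \<in> G' \<times> Q - Sig"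
      obtain R' Z where xRZ: "x = (R', Z)" by (cases x)
      have RG: "R' \<in> G'" and ZQ: "Z \<in> Q" and nS: "(R', Z) \<notin> Sig"
        using x unfolding xRZ by simp_all
      have "\<not> (\<forall>y\<in>Z. R' y = None)"
      proof
        assume "\<forall>y\<in>Z. R' y = None"
        then have "(R', Z) \<in> Sig" unfolding Sig_def using RG ZQ by simp
        then show False using nS by contradiction
      qed
      note x' = xRZ ZQ this
      then obtain y where y: "y \<in> Z" "R' y \<noteq> None" by blast
      have ZS: "Z \<subseteq> {..<p}" using ZQ unfolding Q_def by blast
      have fZ: "finite Z" by (rule finite_subset[OF ZS]) simp
      have "(\<Prod>y\<in>Z. e (R' y)) = 0"
        by (rule prod_zero[OF fZ], rule bexI[of _ y]) (use y in \<open>auto simp: e_def\<close>)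
      then show "T x = 0" unfolding xRZ T_def by simp
    qed
  qed
  define merge where "merge = (\<lambda>(R' :: nat \<Rightarrow> nat set option, Z :: nat set). (\<lambda>y. if y \<in> Z then Some S0 else R' y))"
  define split where "split = (\<lambda>R :: nat \<Rightarrow> nat set option.
     ((\<lambda>y. if y < p \<and> R y = Some S0 then None else R y), {y. y < p \<and> R y = Some S0}))"
  have aS0: "a \<in> S0" unfolding S0_def by simp
  have step5: "(\<Sum>x\<in>Sig. T x) = (\<Sum>R\<in>Blk p a X A. \<Prod>y<p. wt t c (R y))"
  proof (rule sum.reindex_bij_witness[where j = merge and i = split])
    fix x assume "x \<in> Sig"
    then obtain R' Z where x: "x = (R', Z)" "good p (X - A) R'" "Z \<subseteq> {..<p}" "Z \<noteq> {}" "\<forall>y\<in>Z. R' y = None"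
      unfolding Sig_def G'_def Good_def Q_def by auto
    have notS0: "R' y \<noteq> Some S0" if "y < p" for y
    proof
      assume "R' y = Some S0"
      then have "S0 \<subseteq> X - A" using good_sub[OF x(2) that] by simp
      then show False using aS0 aX by auto
    qed
    have mzf: "merge x = (\<lambda>y. if y \<in> Z then Some S0 else R' y)"
      unfolding merge_def x by simp
    show "split (merge x) = x"
    proof -
      have eq1: "(\<lambda>y. if y < p \<and> (if y \<in> Z then Some S0 else R' y) = Some S0 then None else (if y \<in> Z then Some S0 else R' y)) = R'"
      proof
        fix y show "(if y < p \<and> (if y \<in> Z then Some S0 else R' y) = Some S0 then None else (if y \<in> Z then Some S0 else R' y)) = R' y"
          using x(3,5) notS0[of y] by (cases "y \<in> Z") auto
      qed
      have eq2: "{y. y < p \<and> (if y \<in> Z then Some S0 else R' y) = Some S0} = Z"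
        using x(3) notS0 by auto
      have "split (merge x) = ((\<lambda>y. if y < p \<and> (if y \<in> Z then Some S0 else R' y) = Some S0 then None else (if y \<in> Z then Some S0 else R' y)),
           {y. y < p \<and> (if y \<in> Z then Some S0 else R' y) = Some S0})"
        unfolding mzf split_def by (rule refl)
      also have "\<dots> = x" unfolding eq1 eq2 x(1) by (rule refl)
      finally show ?thesis .
    qed
    have mz: "merge x y = (if y \<in> Z then Some S0 else R' y)" for y
      unfolding merge_def x by simp
    show "merge x \<in> Blk p a X A"
    proof -
      have "good p (insert a X) (merge x)"
      proof (rule goodI)
        fix y assume "p \<le> y"
        then show "merge x y = undefined" using x(3) good_undef[OF x(2)] unfolding mz by auto
      next
        fix y S assume yS: "y < p" "merge x y = Some S"
        show "S \<subseteq> insert a X"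
        proof (cases "y \<in> Z")
          case True
          then show ?thesis using yS AX unfolding mz S0_def by auto
        next
          case False
          then have "R' y = Some S" using yS unfolding mz by simp
          then show ?thesis using good_sub[OF x(2) yS(1)] by auto
        qed
      next
        fix y y' S S' assume yy: "y < p" "y' < p" "merge x y = Some S" "merge x y' = Some S'"
        show "S = S' \<or> S \<inter> S' = {}"
        proof (cases "y \<in> Z")
          case True
          then have S: "S = S0" using yy unfolding mz by auto
          show ?thesis
          proof (cases "y' \<in> Z")
            case True
            then show ?thesis using yy S unfolding mz by auto
          next
            case False
            then have "R' y' = Some S'" using yy unfolding mz by auto
            then have "S' \<subseteq> X - A" using good_sub[OF x(2) yy(2)] by simp
            then show ?thesis using S aX unfolding S0_def by auto
          qed
        next
          case False
          then have RS: "R' y = Some S" using yy unfolding mz by auto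
          then have SXA: "S \<subseteq> X - A" using good_sub[OF x(2) yy(1)] by simp
          show ?thesis
          proof (cases "y' \<in> Z")
            case True
            then have "S' = S0" using yy unfolding mz by auto
            then show ?thesis using SXA aX unfolding S0_def by auto
          next
            case False
            then have "R' y' = Some S'" using yy unfolding mz by auto
            then show ?thesis using good_disj[OF x(2) yy(1,2) RS] by simp
          qed
        qed
      qed
      moreover obtain y0 where "y0 \<in> Z" using x(4) by auto
      then have "y0 < p" "merge x y0 = Some (insert a A)" using x(3) unfolding mz S0_def by auto
      ultimately show ?thesis unfolding Blk_def Good_def by auto
    qed
    have "(\<Prod>y<p. wt t c (merge x y)) = (\<Prod>y\<in>{..<p} - Z. wt t c (merge x y)) * (\<Prod>y\<in>Z. wt t c (merge x y))"
      using x(3) by (intro prod.subset_diff) auto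
    also have "(\<Prod>y\<in>{..<p} - Z. wt t c (merge x y)) = (\<Prod>y\<in>{..<p} - Z. wt t c (R' y))"
      unfolding mz by (intro prod.cong) auto
    also have "(\<Prod>y\<in>Z. wt t c (merge x y)) = (\<Prod>y\<in>Z. e (R' y))"
      unfolding mz using x(5) dS0 by (intro prod.cong) (auto simp: e_def)
    finally show "(\<Prod>y<p. wt t c (merge x y)) = T x"
      unfolding T_def x by (simp add: mult.commute)
  next
    fix R assume "R \<in> Blk p a X A"
    then have g: "good p (insert a X) R" and ex: "\<exists>y<p. R y = Some S0"
      unfolding Blk_def Good_def S0_def by auto
    then obtain y0 where y0: "y0 < p" "R y0 = Some S0" by auto
    obtain R' Z where sp: "split R = (R', Z)" by (cases "split R")
    then have R': "R' = (\<lambda>y. if y < p \<and> R y = Some S0 then None else R y)"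
      and Z: "Z = {y. y < p \<and> R y = Some S0}" unfolding split_def by auto
    show "merge (split R) = R"
    proof
      fix y show "merge (split R) y = R y"
        unfolding sp merge_def R' Z by auto
    qed
    have gR': "good p (X - A) R'"
    proof (rule goodI)
      fix y assume "p \<le> y" then show "R' y = undefined" using good_undef[OF g] unfolding R' by auto
    next
      fix y S assume yS: "y < p" "R' y = Some S"
      then have RS: "R y = Some S" "S \<noteq> S0" unfolding R' by (auto split: if_splits)
      then have "S \<inter> S0 = {}" using good_disj[OF g yS(1) y0(1) RS(1) y0(2)] by auto
      moreover have "S \<subseteq> insert a X" using good_sub[OF g yS(1) RS(1)] .
      ultimately show "S \<subseteq> X - A" unfolding S0_def by auto
    next
      fix y y' S S' assume yy: "y < p" "y' < p" "R' y = Some S" "R' y' = Some S'"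
      then have "R y = Some S" "R y' = Some S'" unfolding R' by (auto split: if_splits)
      then show "S = S' \<or> S \<inter> S' = {}" using good_disj[OF g yy(1,2)] by simp
    qed
    have "Z \<noteq> {}" "Z \<subseteq> {..<p}" using y0 unfolding Z by auto
    moreover have "\<forall>y\<in>Z. R' y = None" unfolding Z R' by auto
    ultimately show "split R \<in> Sig"
      unfolding sp Sig_def G'_def Good_def Q_def using gR' by auto
  qed
  show ?thesis
    using step1 step3 step4 step5 unfolding d_def by simp
qed

lemma Good_mono: "X \<subseteq> Y \<Longrightarrow> Good p X \<subseteq> Good p Y"
proof
  fix R assume XY: "X \<subseteq> Y" and "R \<in> Good p X"
  then have g: "good p X R" by (simp add: Good_def)
  have "good p Y R"
  proof (rule goodI)
    show "\<And>y. p \<le> y \<Longrightarrow> R y = undefined" using good_undef[OF g] .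
    show "\<And>y S. y < p \<Longrightarrow> R y = Some S \<Longrightarrow> S \<subseteq> Y" using good_sub[OF g] XY by blast
    show "\<And>y y' S S'. y < p \<Longrightarrow> y' < p \<Longrightarrow> R y = Some S \<Longrightarrow> R y' = Some S' \<Longrightarrow> S = S' \<or> S \<inter> S' = {}"
      using good_disj[OF g] .
  qed
  then show "R \<in> Good p Y" by (simp add: Good_def)
qed

lemma W_insert:
  assumes fin: "finite X" and aX: "a \<notin> X"
  shows "W p t (insert a X) c = W p t X c +
    (\<Sum>A\<in>Pow X. W p t (X - A) (c + t ^ Suc (card A)) - W p t (X - A) c)"
proof -
  let ?f = "\<lambda>R. \<Prod>y<p. wt t c (R y)"
  have eq: "Good p (insert a X) = Good p X \<union> (\<Union>A\<in>Pow X. Blk p a X A)"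
  proof (intro equalityI subsetI)
    fix R assume R: "R \<in> Good p (insert a X)"
    then have g: "good p (insert a X) R" by (simp add: Good_def)
    show "R \<in> Good p X \<union> (\<Union>A\<in>Pow X. Blk p a X A)"
    proof (cases "\<exists>y<p. \<exists>S. R y = Some S \<and> a \<in> S")
      case True
      then obtain y S where yS: "y < p" "R y = Some S" "a \<in> S" by blast
      have "S \<subseteq> insert a X" using good_sub[OF g yS(1,2)] .
      then have A: "S - {a} \<in> Pow X" by auto
      have "S = insert a (S - {a})" using yS(3) by auto
      then have "R \<in> Blk p a X (S - {a})" unfolding Blk_def using R yS by auto
      then show ?thesis using A by blast
    next
      case False
      have "good p X R"
      proof (rule goodI)
        show "\<And>y. p \<le> y \<Longrightarrow> R y = undefined" using good_undef[OF g] .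
        fix y S assume "y < p" "R y = Some S"
        then show "S \<subseteq> X" using good_sub[OF g, of y S] False by blast
      next
        show "\<And>y y' S S'. y < p \<Longrightarrow> y' < p \<Longrightarrow> R y = Some S \<Longrightarrow> R y' = Some S' \<Longrightarrow> S = S' \<or> S \<inter> S' = {}"
          using good_disj[OF g] .
      qed
      then show ?thesis by (simp add: Good_def)
    qed
  next
    fix R assume "R \<in> Good p X \<union> (\<Union>A\<in>Pow X. Blk p a X A)"
    then show "R \<in> Good p (insert a X)"
      using Good_mono[of X "insert a X" p] unfolding Blk_def by blast
  qed
  have finGX: "finite (Good p X)" using fin by (rule finite_Good)
  have finB: "finite (Blk p a X A)" for A
    using finite_Good[of "insert a X" p] fin unfolding Blk_def by auto
  have disj1: "Good p X \<inter> (\<Union>A\<in>Pow X. Blk p a X A) = {}"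
  proof (rule ccontr)
    assume "Good p X \<inter> (\<Union>A\<in>Pow X. Blk p a X A) \<noteq> {}"
    then obtain R A y where "R \<in> Good p X" "y < p" "R y = Some (insert a A)"
      unfolding Blk_def by blast
    then have "insert a A \<subseteq> X" using good_sub[of p X R y] by (simp add: Good_def)
    then show False using aX by simp
  qed
  have disj2: "\<forall>A\<in>Pow X. \<forall>B\<in>Pow X. A \<noteq> B \<longrightarrow> Blk p a X A \<inter> Blk p a X B = {}"
  proof (intro ballI impI)
    fix A B assume AB: "A \<in> Pow X" "B \<in> Pow X" "A \<noteq> B"
    show "Blk p a X A \<inter> Blk p a X B = {}"
    proof (rule ccontr)
      assume "Blk p a X A \<inter> Blk p a X B \<noteq> {}"
      then obtain R y y' where R: "good p (insert a X) R" "y < p" "R y = Some (insert a A)"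
          "y' < p" "R y' = Some (insert a B)"
        unfolding Blk_def Good_def by blast
      have "insert a A = insert a B \<or> insert a A \<inter> insert a B = {}"
        using good_disj[OF R(1) R(2) R(4) R(3) R(5)] .
      then have "insert a A = insert a B" by blast
      moreover have "a \<notin> A" "a \<notin> B" using AB aX by auto
      ultimately have "A = B" by (metis Diff_insert_absorb)
      then show False using AB by simp
    qed
  qed
  have "W p t (insert a X) c = sum ?f (Good p X) + sum ?f (\<Union>A\<in>Pow X. Blk p a X A)"
    unfolding W_def eq
    by (rule sum.union_disjoint) (use fin finGX finB disj1 in auto)
  also have "sum ?f (\<Union>A\<in>Pow X. Blk p a X A) = (\<Sum>A\<in>Pow X. sum ?f (Blk p a X A))"
    by (rule sum.UNION_disjoint) (use fin finB disj2 in auto)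
  also have "\<dots> = (\<Sum>A\<in>Pow X. W p t (X - A) (c + t ^ Suc (card A)) - W p t (X - A) c)"
    by (rule sum.cong[OF refl]) (rule blk_sum[OF fin aX], simp)
  finally show ?thesis unfolding W_def by simp
qed

lemma sum_Pow_card:
  fixes f :: "nat \<Rightarrow> real"
  assumes "finite X"
  shows "(\<Sum>A\<in>Pow X. f (card A)) = (\<Sum>k\<le>card X. real (card X choose k) * f k)"
proof -
  have "(\<Sum>A\<in>Pow X. f (card A)) = (\<Sum>k\<le>card X. \<Sum>A\<in>{A. A \<in> Pow X \<and> card A = k}. f (card A))"
    by (rule sum.group[symmetric]) (use assms in \<open>auto intro: card_mono\<close>)
  also have "\<dots> = (\<Sum>k\<le>card X. real (card X choose k) * f k)"
  proof (rule sum.cong[OF refl])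
    fix k
    have "(\<Sum>A\<in>{A. A \<in> Pow X \<and> card A = k}. f (card A)) = (\<Sum>A\<in>{A. A \<in> Pow X \<and> card A = k}. f k)"
      by (rule sum.cong) auto
    also have "\<dots> = real (card {A. A \<subseteq> X \<and> card A = k}) * f k" by simp
    also have "\<dots> = real (card X choose k) * f k" using n_subsets[OF assms] by simp
    finally show "(\<Sum>A\<in>{A. A \<in> Pow X \<and> card A = k}. f (card A)) = real (card X choose k) * f k" .
  qed
  finally show ?thesis .
qed

lemma Rn_0: "Rn p t 0 c = (1 + c) ^ p"
proof -
  have "partitions_of 0 = {{#}}"
  proof (intro equalityI subsetI)
    fix M assume "M \<in> partitions_of 0"
    then have pos: "\<forall>x\<in>#M. 0 < x" and s0: "sum_mset M = 0" by (auto simp: partitions_of_def)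
    show "M \<in> {{#}}"
    proof (cases M)
      case empty
      then show ?thesis by simp
    next
      case (add x N)
      then have "x \<le> sum_mset M" by simp
      moreover have "0 < x" using pos add by simp
      ultimately show ?thesis using s0 by simp
    qed
  qed (simp add: partitions_of_def)
  moreover have "ruc 1 = -1" unfolding ruc_def by simp
  ultimately show ?thesis
    unfolding Rn_def Psi_def sseq_def by (simp add: P_part_def part_fact_def)
qed

lemma W_eq_Rn: "finite X \<Longrightarrow> W p t X c = Rn p t (card X) c"
proof (induction "card X" arbitrary: X c rule: less_induct)
  case less
  show ?case
  proof (cases "X = {}")
    case True
    then show ?thesis by (simp add: W_empty Rn_0)
  next
    case False
    then obtain a where "a \<in> X" by blast
    define X0 where "X0 = X - {a}"
    have X: "X = insert a X0" "a \<notin> X0" using \<open>a \<in> X\<close> unfolding X0_def by auto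
    have fin0: "finite X0" using less.prems X by simp
    have cX: "card X = Suc (card X0)" using X fin0 by simp
    have IH: "\<And>Y c. Y \<subseteq> X0 \<Longrightarrow> W p t Y c = Rn p t (card Y) c"
    proof -
      fix Y c assume "Y \<subseteq> X0"
      note YX0 = this
      then have "card Y \<le> card X0" using card_mono[OF fin0] by blast
      then have "card Y < card X" using cX by simp
      moreover have "finite Y" using finite_subset[OF YX0 fin0] .
      ultimately show "W p t Y c = Rn p t (card Y) c" using less.hyps by blast
    qed
    have "W p t X c = W p t X0 c + (\<Sum>A\<in>Pow X0. W p t (X0 - A) (c + t ^ Suc (card A)) - W p t (X0 - A) c)"
      unfolding X(1) by (rule W_insert[OF fin0 X(2)])
    also have "\<dots> = Rn p t (card X0) c + (\<Sum>A\<in>Pow X0. Rn p t (card X0 - card A) (c + t ^ Suc (card A)) - Rn p t (card X0 - card A) c)"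
    proof -
      have "\<And>A. A \<in> Pow X0 \<Longrightarrow> card (X0 - A) = card X0 - card A"
        using fin0 by (auto intro: card_Diff_subset finite_subset)
      then show ?thesis using IH by (intro arg_cong2[where f = "(+)"] sum.cong) auto
    qed
    also have "(\<Sum>A\<in>Pow X0. Rn p t (card X0 - card A) (c + t ^ Suc (card A)) - Rn p t (card X0 - card A) c)
        = (\<Sum>k\<le>card X0. real (card X0 choose k) * (Rn p t (card X0 - k) (c + t ^ Suc k) - Rn p t (card X0 - k) c))"
      by (rule sum_Pow_card[OF fin0, where f = "\<lambda>k. Rn p t (card X0 - k) (c + t ^ Suc k) - Rn p t (card X0 - k) c"])
    also have "Rn p t (card X0) c + \<dots> = Rn p t (card X) c"
      unfolding cX by (rule Rn_Suc[symmetric])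
    finally show ?thesis .
  qed
qed

definition Tabs :: "nat \<Rightarrow> nat \<Rightarrow> (nat \<times> nat) set set" where
  "Tabs n p = {T. tableau n p T \<and> saturated T}"

lemma Tabs_sub: "Tabs n p \<subseteq> Pow ({0..<n} \<times> {0..<p})"
  unfolding Tabs_def tableau_def by auto

lemma finite_Tabs: "finite (Tabs n p)"
  by (rule finite_subset[OF Tabs_sub]) simp

lemma alpha_poly_sum: "alpha_poly n p t = (\<Sum>T\<in>Tabs n p. t ^ card T)"
proof -
  have cardle: "card T \<le> n * p" if "T \<in> Tabs n p" for T
  proof -
    have "T \<subseteq> {0..<n} \<times> {0..<p}" using that Tabs_sub by blast
    then have "card T \<le> card ({0..<n} \<times> {0..<p})" by (intro card_mono) auto
    then show ?thesis by (simp add: card_cartesian_product)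
  qed
  have "(\<Sum>T\<in>Tabs n p. t ^ card T) = (\<Sum>j\<le>n * p. \<Sum>T\<in>{T. T \<in> Tabs n p \<and> card T = j}. t ^ card T)"
    by (rule sum.group[symmetric]) (use finite_Tabs cardle in auto)
  also have "\<dots> = (\<Sum>j\<le>n * p. real (alpha_coeff j n p) * t ^ j)"
  proof (rule sum.cong[OF refl])
    fix j
    have "(\<Sum>T\<in>{T. T \<in> Tabs n p \<and> card T = j}. t ^ card T) = (\<Sum>T\<in>{T. T \<in> Tabs n p \<and> card T = j}. t ^ j)"
      by (rule sum.cong) auto
    also have "\<dots> = real (card {T. T \<in> Tabs n p \<and> card T = j}) * t ^ j" by simp
    finally have e: "(\<Sum>T\<in>{T. T \<in> Tabs n p \<and> card T = j}. t ^ card T) = real (card {T. T \<in> Tabs n p \<and> card T = j}) * t ^ j" .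
    have eqset: "{T. T \<in> Tabs n p \<and> card T = j} = {T. tableau n p T \<and> saturated T \<and> card T = j}"
      unfolding Tabs_def by auto
    show "(\<Sum>T\<in>{T. T \<in> Tabs n p \<and> card T = j}. t ^ card T) = real (alpha_coeff j n p) * t ^ j"
      unfolding alpha_coeff_def eqset[symmetric] by (rule e)
  qed
  finally show ?thesis unfolding alpha_poly_def by simp
qed

definition col :: "nat \<Rightarrow> (nat \<times> nat) set \<Rightarrow> nat \<Rightarrow> nat set option" where
  "col p T = (\<lambda>y. if y < p then Some {x. (x, y) \<in> T} else undefined)"

definition tab :: "nat \<Rightarrow> (nat \<Rightarrow> nat set option) \<Rightarrow> (nat \<times> nat) set" where
  "tab p R = {(x, y). y < p \<and> x \<in> the (R y)}"

lemma card_tab_sum: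
  fixes T :: "(nat \<times> nat) set"
  assumes "T \<subseteq> {0..<n} \<times> {0..<p}"
  shows "card T = (\<Sum>y<p. card {x. (x, y) \<in> T})"
proof -
  have T: "T = (\<Union>y\<in>{..<p}. {x. (x, y) \<in> T} \<times> {y})"
  proof (intro equalityI subsetI)
    fix z assume z: "z \<in> T"
    obtain x y where zz: "z = (x, y)" by (cases z)
    have "y < p" using assms z zz by auto
    then show "z \<in> (\<Union>y\<in>{..<p}. {x. (x, y) \<in> T} \<times> {y})" using z zz by blast
  next
    fix z assume "z \<in> (\<Union>y\<in>{..<p}. {x. (x, y) \<in> T} \<times> {y})"
    then show "z \<in> T" by blast
  qed
  have fin: "finite {x. (x, y) \<in> T}" for y
  proof (rule finite_subset[of _ "{0..<n}"])
    show "{x. (x, y) \<in> T} \<subseteq> {0..<n}" using assms by blast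
  qed simp
  have "card T = card (\<Union>y\<in>{..<p}. {x. (x, y) \<in> T} \<times> {y})" using T by simp
  also have "\<dots> = (\<Sum>y<p. card ({x. (x, y) \<in> T} \<times> {y}))"
  proof (rule card_UN_disjoint)
    show "finite {..<p}" by simp
    show "\<forall>i\<in>{..<p}. finite ({x. (x, i) \<in> T} \<times> {i})" using fin by simp
    show "\<forall>i\<in>{..<p}. \<forall>j\<in>{..<p}. i \<noteq> j \<longrightarrow> ({x. (x, i) \<in> T} \<times> {i}) \<inter> ({x. (x, j) \<in> T} \<times> {j}) = {}"
      by blast
  qed
  also have "\<dots> = (\<Sum>y<p. card {x. (x, y) \<in> T})"
    by (simp add: card_cartesian_product)
  finally show ?thesis .
qed

lemma W_alpha: "W p t {0..<n} 0 = alpha_poly n p t"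
proof -
  define G0 where "G0 = {R \<in> Good p {0..<n}. \<forall>y<p. R y \<noteq> None}"
  have "W p t {0..<n} 0 = (\<Sum>R\<in>G0. \<Prod>y<p. wt t 0 (R y))"
    unfolding W_def
  proof (rule sum.mono_neutral_right)
    show "finite (Good p {0..<n})" by (rule finite_Good) simp
    show "G0 \<subseteq> Good p {0..<n}" unfolding G0_def by auto
    show "\<forall>R\<in>Good p {0..<n} - G0. (\<Prod>y<p. wt t 0 (R y)) = 0"
    proof
      fix R assume "R \<in> Good p {0..<n} - G0"
      then obtain y where y: "y < p" "R y = None" unfolding G0_def by auto
      have "wt t 0 (R y) = 0" using y by simp
      then show "(\<Prod>y<p. wt t 0 (R y)) = 0"
        by (rule prod_zero[OF finite_lessThan, rule_format, OF bexI[of _ y]]) (use y in simp)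
    qed
  qed
  also have "\<dots> = (\<Sum>T\<in>Tabs n p. t ^ card T)"
  proof (rule sym, rule sum.reindex_bij_witness[where j = "col p" and i = "tab p"])
    fix T assume T: "T \<in> Tabs n p"
    then have Tsub: "T \<subseteq> {0..<n} \<times> {0..<p}" and sat: "saturated T"
      unfolding Tabs_def tableau_def by auto
    show "tab p (col p T) = T"
      unfolding tab_def col_def using Tsub by auto
    have "good p {0..<n} (col p T)"
    proof (rule goodI)
      show "\<And>y. p \<le> y \<Longrightarrow> col p T y = undefined" unfolding col_def by simp
      show "\<And>y S. y < p \<Longrightarrow> col p T y = Some S \<Longrightarrow> S \<subseteq> {0..<n}"
        unfolding col_def using Tsub by auto
      fix y y' S S' assume yy: "y < p" "y' < p" "col p T y = Some S" "col p T y' = Some S'"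
      then have S: "S = {x. (x, y) \<in> T}" and S': "S' = {x. (x, y') \<in> T}" unfolding col_def by auto
      show "S = S' \<or> S \<inter> S' = {}"
      proof (cases "S \<inter> S' = {}")
        case False
        then obtain x where x: "(x, y) \<in> T" "(x, y') \<in> T" unfolding S S' by auto
        have "S \<subseteq> S'"
        proof
          fix z assume "z \<in> S"
          then have "(z, y) \<in> T" unfolding S by simp
          then have "(z, y') \<in> T" using x sat[unfolded saturated_def, rule_format, where x=x and y=z and x'=y' and y'=y] by simp
          then show "z \<in> S'" unfolding S' by simp
        qed
        moreover have "S' \<subseteq> S"
        proof
          fix z assume "z \<in> S'"
          then have "(z, y') \<in> T" unfolding S' by simp
          then have "(z, y) \<in> T" using x sat[unfolded saturated_def, rule_format, where x=x and y=z and x'=y and y'=y'] by simp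
          then show "z \<in> S" unfolding S by simp
        qed
        ultimately show ?thesis by blast
      qed simp
    qed
    then show "col p T \<in> G0" unfolding G0_def Good_def col_def by auto
    have "t ^ card T = t ^ (\<Sum>y<p. card {x. (x, y) \<in> T})" using card_tab_sum[OF Tsub] by simp
    also have "\<dots> = (\<Prod>y<p. t ^ card {x. (x, y) \<in> T})" by (rule power_sum)
    also have "\<dots> = (\<Prod>y<p. wt t 0 (col p T y))" unfolding col_def by simp
    finally show "(\<Prod>y<p. wt t 0 (col p T y)) = t ^ card T" by simp
  next
    fix R assume "R \<in> G0"
    then have g: "good p {0..<n} R" and nn: "\<And>y. y < p \<Longrightarrow> R y \<noteq> None" unfolding G0_def Good_def by auto
    have cs: "{x. (x, y) \<in> tab p R} = the (R y)" if "y < p" for y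
      unfolding tab_def using that by auto
    show "col p (tab p R) = R"
    proof
      fix y show "col p (tab p R) y = R y"
      proof (cases "y < p")
        case True
        then show ?thesis unfolding col_def using cs[OF True] nn[OF True] by auto
      next
        case False
        then show ?thesis unfolding col_def using good_undef[OF g, of y] by simp
      qed
    qed
    have Rsome: "R y = Some (the (R y))" if "y < p" for y using nn[OF that] by simp
    have "tableau n p (tab p R)"
      unfolding tableau_def tab_def using good_sub[OF g _ Rsome] by auto
    moreover have "saturated (tab p R)"
      unfolding saturated_def
    proof (intro allI impI)
      fix x y x' y' assume a: "(x, x') \<in> tab p R \<and> (x, y') \<in> tab p R \<and> (y, y') \<in> tab p R"
      then have lt: "x' < p" "y' < p" and m: "x \<in> the (R x')" "x \<in> the (R y')" "y \<in> the (R y')"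
        unfolding tab_def by auto
      have "the (R x') = the (R y') \<or> the (R x') \<inter> the (R y') = {}"
        using good_disj[OF g lt(1) lt(2) Rsome[OF lt(1)] Rsome[OF lt(2)]] .
      then have "the (R x') = the (R y')" using m by blast
      then show "(y, x') \<in> tab p R" using m lt unfolding tab_def by auto
    qed
    ultimately show "tab p R \<in> Tabs n p" unfolding Tabs_def by simp
  qed
  also have "\<dots> = alpha_poly n p t" by (rule alpha_poly_sum[symmetric])
  finally show ?thesis .
qed

lemma Rn_final:
  "Rn p t n 0 = - fact n * (\<Sum>i\<le>n. of_int (ruc (n - i + 1)) / fact (n - i) *
        (\<Sum>lam\<in>partitions_of i. (1 + P_part lam t) ^ p / real (part_fact lam)))"
proof -
  have "Rn p t n 0 = (\<Sum>i\<le>n. - fact n * (of_int (ruc (n - i + 1)) / fact (n - i) *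
        (\<Sum>lam\<in>partitions_of i. (1 + P_part lam t) ^ p / real (part_fact lam))))"
    unfolding Rn_def
  proof (rule sum.cong[OF refl])
    fix i assume "i \<in> {..n}"
    then have i: "i \<le> n" by simp
    have b: "real (n choose i) * fact i = fact n / fact (n - i)"
      using i by (simp add: binomial_fact field_simps)
    have "real (n choose i) * (sseq (n - i) * Psi p t i 0)
       = - (real (n choose i) * fact i) * of_int (ruc (n - i + 1)) *
          (\<Sum>lam\<in>partitions_of i. (1 + P_part lam t) ^ p / real (part_fact lam))"
      unfolding sseq_def Psi_def by simp
    also have "\<dots> = - fact n * (of_int (ruc (n - i + 1)) / fact (n - i) *
        (\<Sum>lam\<in>partitions_of i. (1 + P_part lam t) ^ p / real (part_fact lam)))"
      unfolding b by simp
    finally show "real (n choose i) * (sseq (n - i) * Psi p t i 0) = - fact n * (of_int (ruc (n - i + 1)) / fact (n - i) *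
        (\<Sum>lam\<in>partitions_of i. (1 + P_part lam t) ^ p / real (part_fact lam)))" .
  qed
  also have "\<dots> = - fact n * (\<Sum>i\<le>n. of_int (ruc (n - i + 1)) / fact (n - i) *
        (\<Sum>lam\<in>partitions_of i. (1 + P_part lam t) ^ p / real (part_fact lam)))"
    by (simp add: sum_distrib_left)
  finally show ?thesis .
qed

theorem theorem2:
  fixes n p :: nat and t :: real
  assumes "n \<ge> 1"
  shows "alpha_poly n p t =
    - fact n * (\<Sum>i\<le>n. of_int (ruc (n - i + 1)) / fact (n - i) *
        (\<Sum>lam\<in>partitions_of i. (1 + P_part lam t) ^ p / real (part_fact lam)))"
proof -
  have "alpha_poly n p t = W p t {0..<n} 0" by (rule W_alpha[symmetric])
  also have "\<dots> = Rn p t n 0" using W_eq_Rn[of "{0..<n}" p t 0] by simp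
  also note Rn_final
  finally show ?thesis .
qed

end
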